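(* Let $\mathcal{X}$ be a finite alphabet, $p_X$ a probability distribution on $\mathcal{X}$, and $\{\rho_x\}_{x\in\mathcal{X}}$ density operators on a finite-dimensional Hilbert space $\mathcal{H}$, with expected state $\rho\equiv\sum_{x}p_X(x)\rho_x$. Suppose there exist an orthogonal projector $\Pi$ (the "code subspace projector") and orthogonal projectors $\{\Pi_x\}_{x\in\mathcal{X}}$ (the "codeword subspace projectors") on $\mathcal{H}$, and constants $D,d>0$, $0<\epsilon\le 1/2$, such that for all $x\in\mathcal{X}$: $$\mathrm{Tr}\{\Pi\rho_x\}\ge 1-\epsilon,\quad \mathrm{Tr}\{\Pi_x\rho_x\}\ge 1-\epsilon,\quad \Pi_x\rho_x\Pi_x\ge \tfrac{1}{d}\Pi_x,\quad \Pi\rho\Pi\le \tfrac{1}{D}\Pi,\quad [\Pi_x,\rho_x]=0.$$ Let $\mathcal{M}=\{1,\dots,|\mathcal{M}|\}$ be a message set and let $\mathcal{C}=\{c_m\}_{m\in\mathcal{M}}$ be a random code whose codewords $c_m\in\mathcal{X}$ are drawn independently, each according to $p_X$. For a code $\mathcal{C}$ define the sequential decoding POVM $\{\Lambda_m\}_{m\in\mathcal{M}}$ by $$\Lambda_m\equiv \bar{Q}_{c_1}\cdots\bar{Q}_{c_{m-1}}\,\bar{\Pi}_{c_m}\,\bar{Q}_{c_{m-1}}\cdots\bar{Q}_{c_1},$$ where $Q_x\equiv I-\Pi_x$ and $\bar\Theta\equiv\Pi\Theta\Pi$ for any operator $\Theta$ (this corresponds to the receiver alternately measuring $\{\Pi,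 I-\Pi\}$ and $\{\Pi_{c_k},I-\Pi_{c_k}\}$ for $k=1,2,\dots$, declaring message $k$ at the first YES outcome of $\Pi_{c_k}$), and define the average success probability $\bar p_{\mathrm{succ}}(\mathcal{C})\equiv\frac{1}{|\mathcal{M}|}\sum_{m}\mathrm{Tr}\{\Lambda_m\rho_{c_m}\}$. Then, provided $2-\exp\{d|\mathcal{M}|/D\}>0$, $$\mathbb{E}_{\mathcal{C}}\{\bar p_{\mathrm{succ}}(\mathcal{C})\}\ \ge\ \left|(1-2\epsilon)\left(2-e^{\frac{d}{D}|\mathcal{M}|}\right)\right|^2 .$$
   Context: All Hilbert spaces are finite-dimensional. Operator inequalities $A\ge B$ mean $A-B$ is positive semidefinite. $\mathbb{E}_{\mathcal{C}}$ denotes expectation over the random choice of the code. *)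

theory Defs
  imports "HOL-Analysis.Analysis"
begin

definition cadj :: "complex^'n^'n \<Rightarrow> complex^'n^'n" where
  "cadj A = (\<chi> i j. cnj (A $ j $ i))"

definition mtrace :: "complex^'n^'n \<Rightarrow> complex" where
  "mtrace A = (\<Sum>i\<in>UNIV. A $ i $ i)"

definition qform :: "complex^'n^'n \<Rightarrow> complex^'n \<Rightarrow> complex" where
  "qform A v = (\<Sum>i\<in>UNIV. cnj (v $ i) * (A *v v) $ i)"

definition psd :: "complex^'n^'n \<Rightarrow> bool" where
  "psd A \<longleftrightarrow> cadj A = A \<and> (\<forall>v. qform A v \<in> \<real> \<and> 0 \<le> Re (qform A v))"

definition loewner_le :: "complex^'n^'n \<Rightarrow> complex^'n^'n \<Rightarrow> bool" where
  "loewner_le A B \<longleftrightarrow> psd (B - A)"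

definition density :: "complex^'n^'n \<Rightarrow> bool" where
  "density A \<longleftrightarrow> psd A \<and> mtrace A = 1"

definition projector :: "complex^'n^'n \<Rightarrow> bool" where
  "projector P \<longleftrightarrow> P ** P = P \<and> cadj P = P"

fun prodL :: "complex^'n^'n \<Rightarrow> ('x \<Rightarrow> complex^'n^'n) \<Rightarrow> 'x list \<Rightarrow> complex^'n^'n" where
  "prodL Cproj Px [] = mat 1"
| "prodL Cproj Px (x # xs) = (Cproj ** (mat 1 - Px x) ** Cproj) ** prodL Cproj Px xs"

fun prodR :: "complex^'n^'n \<Rightarrow> ('x \<Rightarrow> complex^'n^'n) \<Rightarrow> 'x list \<Rightarrow> complex^'n^'n" where
  "prodR Cproj Px [] = mat 1"
| "prodR Cproj Px (x # xs) = prodR Cproj Px xs ** (Cproj ** (mat 1 - Px x) ** Cproj)"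

text \<open>Sequential decoding POVM element for message m (0-indexed) of code c
  (a list of codewords): Lambda_m = Qbar_{c_0}..Qbar_{c_{m-1}} Pibar_{c_m} Qbar_{c_{m-1}}..Qbar_{c_0}.\<close>
definition seqPOVM :: "complex^'n^'n \<Rightarrow> ('x \<Rightarrow> complex^'n^'n) \<Rightarrow> 'x list \<Rightarrow> nat \<Rightarrow> complex^'n^'n" where
  "seqPOVM Cproj Px c m =
     prodL Cproj Px (take m c) ** (Cproj ** Px (c ! m) ** Cproj) ** prodR Cproj Px (take m c)"

definition psucc :: "complex^'n^'n \<Rightarrow> ('x \<Rightarrow> complex^'n^'n) \<Rightarrow> ('x \<Rightarrow> complex^'n^'n) \<Rightarrow> 'x list \<Rightarrow> real" where
  "psucc Cproj Px rho c =
     (1 / real (length c)) * (\<Sum>m<length c. Re (mtrace (seqPOVM Cproj Px c m ** rho (c ! m))))"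

definition code_expect :: "('x::finite \<Rightarrow> real) \<Rightarrow> nat \<Rightarrow> ('x list \<Rightarrow> real) \<Rightarrow> real" where
  "code_expect p M f = (\<Sum>c\<in>{c::'x list. length c = M}. (\<Prod>m<M. p (c ! m)) * f c)"

end

theory Submission
  imports Defs
begin

lemma scaleR_mat_nth[simp]: "((r::real) *\<^sub>R (A::complex^'n^'m))$i$j = of_real r * A$i$j"
  by (simp only: vector_scaleR_component) (simp add: scaleR_conv_of_real)
lemma matrix_add_rdistrib': "((B + C) ** A) = (B ** A) + (C ** A)"
  by (simp add: matrix_matrix_mult_def vec_eq_iff sum.distrib algebra_simps)
lemma matrix_diff_ldistrib: "(A :: 'a::ring_1^'n^'n) ** (B - C) = (A ** B) - (A ** C)"
  by (simp add: matrix_matrix_mult_def vec_eq_iff sum_subtractf algebra_simps)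
lemma matrix_diff_rdistrib: "((B - C) ** (A :: 'a::ring_1^'n^'n)) = (B ** A) - (C ** A)"
  by (simp add: matrix_matrix_mult_def vec_eq_iff sum_subtractf algebra_simps)
lemma matrix_scaleR_left: "((r::real) *\<^sub>R (A::complex^'n^'n)) ** B = r *\<^sub>R (A ** B)"
  by (simp add: matrix_matrix_mult_def vec_eq_iff sum_distrib_left algebra_simps del: vector_scaleR_component)
lemma matrix_scaleR_right: "(A::complex^'n^'n) ** ((r::real) *\<^sub>R B) = r *\<^sub>R (A ** B)"
  by (simp add: matrix_matrix_mult_def vec_eq_iff sum_distrib_left algebra_simps del: vector_scaleR_component)
lemma matrix_zero_left[simp]: "(0::'a::semiring_1^'n^'m) ** B = 0"
  by (simp add: matrix_matrix_mult_def vec_eq_iff)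
lemma matrix_zero_right[simp]: "A ** (0::'a::semiring_1^'n^'m) = 0"
  by (simp add: matrix_matrix_mult_def vec_eq_iff)
lemma matrix_sum_left: "finite S \<Longrightarrow> (\<Sum>i\<in>S. f i) ** (B::complex^'n^'n) = (\<Sum>i\<in>S. f i ** B)"
  by (induct S rule: finite_induct) (auto simp: matrix_add_rdistrib')
lemma matrix_sum_right: "finite S \<Longrightarrow> (B::complex^'n^'n) ** (\<Sum>i\<in>S. f i) = (\<Sum>i\<in>S. B ** f i)"
  by (induct S rule: finite_induct) (auto simp: matrix_add_ldistrib)

lemma mat_mult_left: "mat c ** (A::complex^'n^'n) = (\<chi> i j. c * A$i$j)"
  by (simp add: matrix_matrix_mult_def vec_eq_iff mat_def if_distrib[where f="\<lambda>x. x * _"] if_distrib[where f="\<lambda>x. _ * x"] cong: if_cong)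
lemma mat_mult_right: "(A::complex^'n^'n) ** mat c = (\<chi> i j. A$i$j * c)"
  by (simp add: matrix_matrix_mult_def vec_eq_iff mat_def if_distrib[where f="\<lambda>x. x * _"] if_distrib[where f="\<lambda>x. _ * x"] cong: if_cong)

lemma mtrace_add: "mtrace (A + B) = mtrace A + mtrace B"
  by (simp add: mtrace_def sum.distrib)
lemma mtrace_diff: "mtrace (A - B) = mtrace A - mtrace B"
  by (simp add: mtrace_def sum_subtractf)
lemma mtrace_scaleR: "mtrace ((r::real) *\<^sub>R A) = of_real r * mtrace A"
  by (simp add: mtrace_def sum_distrib_left del: vector_scaleR_component)
lemma mtrace_sum: "finite S \<Longrightarrow> mtrace (\<Sum>i\<in>S. f i) = (\<Sum>i\<in>S. mtrace (f i))"
  by (induct S rule: finite_induct) (auto simp: mtrace_add mtrace_def sum.distrib)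
lemma mtrace_zero[simp]: "mtrace 0 = 0" by (simp add: mtrace_def)
lemma mtrace_comm: "mtrace ((A::complex^'n^'n) ** B) = mtrace (B ** A)"
  unfolding mtrace_def matrix_matrix_mult_def
  by (simp, subst sum.swap, simp add: mult.commute)
lemma mtrace_mat_left: "mtrace (mat c ** A) = c * mtrace A"
  by (simp add: mat_mult_left mtrace_def sum_distrib_left)
lemma mtrace_mat_right: "mtrace (A ** mat c) = c * mtrace A"
  by (simp add: mat_mult_right mtrace_def sum_distrib_left mult.commute)

lemma cadj_cadj[simp]: "cadj (cadj A) = A" by (simp add: cadj_def vec_eq_iff)
lemma cadj_mult: "cadj ((A::complex^'n^'n) ** B) = cadj B ** cadj A"
  by (simp add: cadj_def matrix_matrix_mult_def vec_eq_iff mult.commute)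
lemma cadj_add: "cadj (A + B) = cadj A + cadj B" by (simp add: cadj_def vec_eq_iff)
lemma cadj_diff: "cadj (A - B) = cadj A - cadj B" by (simp add: cadj_def vec_eq_iff)
lemma cadj_scaleR: "cadj ((r::real) *\<^sub>R A) = r *\<^sub>R cadj A" by (simp add: cadj_def vec_eq_iff)
lemma cadj_mat[simp]: "cadj (mat c) = mat (cnj c)" by (simp add: cadj_def vec_eq_iff mat_def)
lemma cadj_zero[simp]: "cadj 0 = 0" by (simp add: cadj_def vec_eq_iff)
lemma cadj_sum: "finite S \<Longrightarrow> cadj (\<Sum>i\<in>S. f i) = (\<Sum>i\<in>S. cadj (f i))"
  by (induct S rule: finite_induct) (auto simp: cadj_add)
lemma mtrace_cadj: "mtrace (cadj A) = cnj (mtrace A)" by (simp add: cadj_def mtrace_def)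


definition sform :: "complex^'n^'n \<Rightarrow> complex^'n \<Rightarrow> complex^'n \<Rightarrow> complex" where
  "sform A x y = (\<Sum>i\<in>UNIV. cnj (x $ i) * (A *v y) $ i)"

lemma qform_sform: "qform A v = sform A v v" by (simp add: qform_def sform_def)

lemma sform_expand: "sform A x y = (\<Sum>i\<in>UNIV. \<Sum>j\<in>UNIV. cnj (x$i) * A$i$j * y$j)"
  by (simp add: sform_def matrix_vector_mult_def sum_distrib_left mult.assoc)

lemma sform_add1: "sform A (x + y) z = sform A x z + sform A y z"
  by (simp add: sform_def sum.distrib algebra_simps)
lemma sform_add2: "sform A x (y + z) = sform A x y + sform A x z"
  by (simp add: sform_def sum.distrib algebra_simps matrix_vector_right_distrib)
lemma sform_smult1: "sform A (c *s x) y = cnj c * sform A x y"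
  by (simp add: sform_def sum_distrib_left algebra_simps)
lemma sform_smult2: "sform A x (c *s y) = c * sform A x y"
  by (simp add: sform_expand sum_distrib_left algebra_simps)
lemma sform_herm: "cadj A = A \<Longrightarrow> sform A y x = cnj (sform A x y)"
proof -
  assume h: "cadj A = A"
  have e: "\<And>i j. cnj (A$j$i) = A$i$j" using h by (metis cadj_def vec_lambda_beta)
  have "sform A y x = (\<Sum>i\<in>UNIV. \<Sum>j\<in>UNIV. cnj (y$i) * A$i$j * x$j)" by (rule sform_expand)
  also have "\<dots> = (\<Sum>j\<in>UNIV. \<Sum>i\<in>UNIV. cnj (y$i) * A$i$j * x$j)" by (rule sum.swap)
  also have "\<dots> = cnj (sform A x y)"
    by (simp add: sform_expand e mult.commute mult.left_commute)
  finally show ?thesis .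
qed

lemma qform_comb:
  assumes "cadj A = A"
  shows "qform A (x + c *s y) = qform A x + c * cnj (sform A y x) + cnj c * sform A y x
     + (c * cnj c) * qform A y"
  using sform_herm[OF assms, of x y]
  by (simp add: qform_sform sform_add1 sform_add2 sform_smult1 sform_smult2 algebra_simps)

lemma psd_qform_real: "psd A \<Longrightarrow> qform A v = of_real (Re (qform A v))"
  unfolding psd_def by (metis Reals_cases Re_complex_of_real)

lemma real_quad_lemma:
  fixes qx qy S :: real
  assumes "qx \<ge> 0" "qy \<ge> 0" "S \<ge> 0" and h: "\<And>t. 0 \<le> qx - 2*t*S + t^2 * S * qy"
  shows "S \<le> qx * qy"
proof (cases "qy > 0")
  case True
  have "0 \<le> qx - 2*(1/qy)*S + (1/qy)^2 * S * qy" by (rule h)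
  also have "\<dots> = qx - S/qy" using True by (simp add: power2_eq_square field_simps)
  finally have "S/qy \<le> qx" by simp
  then show ?thesis using True by (simp add: field_simps mult.commute)
next
  case False
  then have qy: "qy = 0" using assms by simp
  show ?thesis
  proof (rule ccontr)
    assume "\<not> ?thesis"
    then have Sp: "S > 0" using qy by simp
    have "0 \<le> qx - 2*((qx+1)/(2*S))*S + ((qx+1)/(2*S))^2 * S * qy" by (rule h)
    also have "\<dots> = -1" using Sp qy by (simp add: field_simps)
    finally show False by simp
  qed
qed

lemma cauchy_schwarz_form:
  assumes "psd A"
  shows "(cmod (sform A y x))^2 \<le> Re (qform A x) * Re (qform A y)"
proof -
  have herm: "cadj A = A" using assms by (simp add: psd_def)
  define s where "s = sform A y x"
  have "\<And>t::real. 0 \<le> Re (qform A x) - 2*t*(cmod s)^2 + t^2 * (cmod s)^2 * Re (qform A y)"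
  proof -
    fix t :: real
    define c where "c = - (of_real t * s)"
    have "0 \<le> Re (qform A (x + c *s y))" using assms by (simp add: psd_def)
    also have "qform A (x + c *s y) = qform A x + c * cnj s + cnj c * s + (c * cnj c) * qform A y"
      using qform_comb[OF herm] s_def by simp
    also have "c * cnj s = - of_real (t * (cmod s)^2)"
      by (simp add: c_def complex_norm_square[symmetric] mult.assoc del: of_real_power)
    also have "cnj c * s = - of_real (t * (cmod s)^2)"
      by (simp add: c_def complex_norm_square[symmetric] mult.commute mult.left_commute del: of_real_power)
    also have "c * cnj c = of_real (t^2 * (cmod s)^2)"
      by (simp add: c_def complex_norm_square[symmetric] power2_eq_square algebra_simps del: of_real_power)
    finally show "0 \<le> Re (qform A x) - 2*t*(cmod s)^2 + t^2 * (cmod s)^2 * Re (qform A y)"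
      by (simp add: algebra_simps)
  qed
  moreover have "Re (qform A x) \<ge> 0" "Re (qform A y) \<ge> 0" using assms by (auto simp: psd_def)
  ultimately have "(cmod s)^2 \<le> Re (qform A x) * Re (qform A y)"
    by (intro real_quad_lemma) auto
  then show ?thesis by (simp add: s_def)
qed


lemma qform_diff: "qform (A - B) v = qform A v - qform B v"
  by (simp add: qform_def matrix_vector_mult_diff_rdistrib sum_subtractf algebra_simps)

definition outer :: "complex^'n \<Rightarrow> complex^'n^'n" where
  "outer u = (\<chi> k l. u$k * cnj (u$l))"

lemma mtrace_outer: "mtrace (P ** outer u) = qform P u"
  by (simp add: mtrace_def qform_def outer_def matrix_matrix_mult_def matrix_vector_mult_def
      sum_distrib_left mult.commute mult.left_commute)

lemma qform_outer: "qform (outer u) v = (\<Sum>k\<in>UNIV. cnj (v$k) * u$k) * cnj (\<Sum>k\<in>UNIV. cnj (v$k) * u$k)"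
  by (simp add: qform_def outer_def matrix_vector_mult_def sum_distrib_left sum_distrib_right
      mult.commute mult.left_commute) (rule sum.swap)

lemma cadj_outer: "cadj (outer u) = outer u"
  by (simp add: cadj_def outer_def vec_eq_iff mult.commute)

lemma mv_axis: "(Y *v axis i 1) $ k = Y$k$i"
  by (simp add: matrix_vector_mult_def axis_def if_distrib[where f="\<lambda>x. _ * x"] cong: if_cong)

lemma sform_axis2: "sform Y x (axis i 1) = (\<Sum>k\<in>UNIV. cnj (x$k) * Y$k$i)"
  by (simp add: sform_def mv_axis)

lemma sform_axis: "sform Y (axis k 1) (axis i 1) = Y$k$i"
  unfolding sform_axis2 by (simp add: axis_def if_distrib[where f=cnj] if_distrib[where f="\<lambda>x. x * _"] cong: if_cong)

lemma qform_axis: "qform Y (axis i 1) = Y$i$i"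
  by (simp add: qform_sform sform_axis)

lemma psd_diag_real: "psd Y \<Longrightarrow> Y$i$i = of_real (Re (Y$i$i)) \<and> Re (Y$i$i) \<ge> 0"
  using psd_qform_real[of Y "axis i 1"] by (simp add: qform_axis psd_def) (metis qform_axis)

lemma psd_offdiag: assumes "psd Y" "Y$k$k = 0" shows "Y$k$i = 0"
proof -
  have "(cmod (sform Y (axis k 1) (axis i 1)))^2 \<le> Re (qform Y (axis i 1)) * Re (qform Y (axis k 1))"
    by (rule cauchy_schwarz_form[OF assms(1)])
  then have "(cmod (Y$k$i))^2 \<le> 0" using assms(2) by (simp add: sform_axis qform_axis)
  then show ?thesis by simp
qed

lemma psd_trace_nonneg_aux:
  "\<forall>Y. psd (Y::complex^'n^'n) \<longrightarrow> card {k. Y$k$k \<noteq> 0} = n \<longrightarrow> (\<forall>P. psd P \<longrightarrow> 0 \<le> Re (mtrace (P ** Y)))"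
proof (induction n rule: less_induct)
  case (less n)
  show ?case
  proof (intro allI impI)
    fix Y P :: "complex^'n^'n"
    assume Y: "psd Y" and cn: "card {k. Y$k$k \<noteq> 0} = n" and P: "psd P"
    show "0 \<le> Re (mtrace (P ** Y))"
    proof (cases "\<exists>i. Y$i$i \<noteq> 0")
      case False
      then have "Y = 0" using psd_offdiag[OF Y] by (simp add: vec_eq_iff)
      then show ?thesis by simp
    next
      case True
      then obtain i where i: "Y$i$i \<noteq> 0" by blast
      define y where "y = Re (Y$i$i)"
      have Yii: "Y$i$i = of_real y" using psd_diag_real[OF Y] y_def by blast
      have y0: "y \<ge> 0" using psd_diag_real[OF Y, of i] unfolding y_def by blast
      have y1: "y \<noteq> 0"
      proof
        assume "y = 0"
        then have "Y$i$i = 0" using Yii by simp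
        then show False using i by blast
      qed
      have ypos: "y > 0" using y0 y1 by linarith
      define u where "u = (\<chi> k. Y$k$i / of_real (sqrt y))"
      define Y' where "Y' = Y - outer u"
      define s where "s = (of_real (sqrt y) :: complex)"
      have ss: "s * s = of_real y"
      proof -
        have "s * s = of_real (sqrt y * sqrt y)" by (simp only: s_def of_real_mult)
        also have "sqrt y * sqrt y = y" using ypos by simp
        finally show ?thesis .
      qed
      have cs: "cnj s = s" by (simp add: s_def)
      have uu: "u$k * cnj (u$l) = Y$k$i * cnj (Y$l$i) / of_real y" for k l
      proof -
        have "u$k * cnj (u$l) = (Y$k$i / s) * (cnj (Y$l$i) / cnj s)" by (simp add: u_def s_def)
        also have "\<dots> = Y$k$i * cnj (Y$l$i) / (s * s)" by (simp only: cs times_divide_times_eq)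
        finally show ?thesis by (simp only: ss)
      qed
      have herm: "cadj Y = Y" using Y by (simp add: psd_def)
      have Y'psd: "psd Y'"
        unfolding psd_def
      proof (rule conjI)
        show "cadj Y' = Y'" by (simp add: Y'_def cadj_diff herm cadj_outer)
      next
        show "\<forall>v. qform Y' v \<in> \<real> \<and> 0 \<le> Re (qform Y' v)"
        proof
        fix v
        define z where "z = (\<Sum>k\<in>UNIV. cnj (v$k) * u$k)"
        have zs: "z = sform Y v (axis i 1) / of_real (sqrt y)"
          by (simp add: z_def sform_axis2 u_def sum_divide_distrib)
        have qo: "qform (outer u) v = of_real ((cmod z)^2)"
          by (simp only: qform_outer z_def[symmetric] complex_norm_square)
        have cs: "(cmod (sform Y v (axis i 1)))^2 \<le> Re (qform Y v) * y"
          using cauchy_schwarz_form[OF Y, where x="axis i 1" and y=v] by (simp add: qform_axis y_def mult.commute)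
        have "(cmod z)^2 = (cmod (sform Y v (axis i 1)))^2 / y"
          using ypos by (simp add: zs norm_divide power_divide)
        also have "\<dots> \<le> Re (qform Y v)" using cs ypos by (simp add: divide_le_eq)
        finally have le: "(cmod z)^2 \<le> Re (qform Y v)" .
        have qY: "qform Y v = of_real (Re (qform Y v))" by (rule psd_qform_real[OF Y])
        have "qform Y' v = of_real (Re (qform Y v) - (cmod z)^2)"
          unfolding Y'_def qform_diff qo by (subst qY) simp
        then show "qform Y' v \<in> \<real> \<and> 0 \<le> Re (qform Y' v)" using le by simp
        qed
      qed
      have diag': "Y'$k$k = Y$k$k - Y$k$i * cnj (Y$k$i) / of_real y" for k
        by (simp add: Y'_def outer_def uu[symmetric])
      have sub: "{k. Y'$k$k \<noteq> 0} \<subseteq> {k. Y$k$k \<noteq> 0} - {i}"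
      proof
        fix k assume k: "k \<in> {k. Y'$k$k \<noteq> 0}"
        have "k \<noteq> i"
        proof
          assume "k = i"
          then have "Y'$k$k = 0" using diag'[of i] Yii ypos
            by (simp add: power2_eq_square)
          then show False using k by simp
        qed
        moreover have "Y$k$k \<noteq> 0"
        proof
          assume "Y$k$k = 0"
          then have "Y$k$i = 0" by (rule psd_offdiag[OF Y])
          then have "Y'$k$k = 0" using diag'[of k] \<open>Y$k$k = 0\<close> by simp
          then show False using k by simp
        qed
        ultimately show "k \<in> {k. Y$k$k \<noteq> 0} - {i}" by simp
      qed
      have "card {k. Y'$k$k \<noteq> 0} < n"
      proof -
        have "card {k. Y'$k$k \<noteq> 0} \<le> card ({k. Y$k$k \<noteq> 0} - {i})"
          by (rule card_mono[OF _ sub]) simp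
        also have "\<dots> < card {k. Y$k$k \<noteq> 0}"
          using i by (intro card_Diff1_less) auto
        finally show ?thesis using cn by simp
      qed
      then have IH: "0 \<le> Re (mtrace (P ** Y'))" using less.IH Y'psd P by blast
      have "P ** Y = P ** Y' + P ** outer u" by (simp add: Y'_def matrix_diff_ldistrib)
      then have "mtrace (P ** Y) = mtrace (P ** Y') + qform P u" by (simp add: mtrace_add mtrace_outer)
      moreover have "0 \<le> Re (qform P u)" using P by (simp add: psd_def)
      ultimately show ?thesis using IH by simp
    qed
  qed
qed

lemma psd_trace_nonneg: "psd P \<Longrightarrow> psd Y \<Longrightarrow> 0 \<le> Re (mtrace (P ** Y))"
  using psd_trace_nonneg_aux by blast


lemma qform_add: "qform (A + B) v = qform A v + qform B v"
  by (simp add: qform_def matrix_vector_mult_add_rdistrib sum.distrib algebra_simps)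
lemma qform_scaleR: "qform ((r::real) *\<^sub>R A) v = of_real r * qform A v"
  by (simp add: qform_def matrix_vector_mult_def sum_distrib_left algebra_simps del: vector_scaleR_component)

lemma psd_add: "psd A \<Longrightarrow> psd B \<Longrightarrow> psd (A + B)"
  by (auto simp: psd_def cadj_add qform_add)
lemma psd_scaleR: "psd A \<Longrightarrow> (r::real) \<ge> 0 \<Longrightarrow> psd (r *\<^sub>R A)"
  by (auto simp: psd_def cadj_scaleR qform_scaleR)
lemma psd_zero: "psd 0"
  by (simp add: psd_def qform_def)
lemma psd_sum: "finite S \<Longrightarrow> (\<And>i. i \<in> S \<Longrightarrow> psd (f i)) \<Longrightarrow> psd (\<Sum>i\<in>S. f i)"
  by (induct S rule: finite_induct) (auto intro: psd_add psd_zero)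

lemma cadj_mv: "(cadj C *v w)$i = (\<Sum>j\<in>UNIV. cnj (C$j$i) * w$j)"
  by (simp add: matrix_vector_mult_def cadj_def)

lemma sform_adj: "sform (cadj C ** A) x y = sform A (C *v x) y"
proof -
  have "sform (cadj C ** A) x y = (\<Sum>i\<in>UNIV. \<Sum>j\<in>UNIV. cnj (x$i) * cnj (C$j$i) * (A *v y)$j)"
    by (simp add: sform_def matrix_vector_mul_assoc[symmetric] cadj_mv
        sum_distrib_left mult.assoc)
  also have "\<dots> = (\<Sum>j\<in>UNIV. \<Sum>i\<in>UNIV. cnj (x$i) * cnj (C$j$i) * (A *v y)$j)" by (rule sum.swap)
  also have "\<dots> = sform A (C *v x) y"
    by (simp add: sform_def matrix_vector_mult_def[of C] sum_distrib_right sum_distrib_left mult.commute mult.left_commute)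
  finally show ?thesis .
qed

lemma qform_congr: "qform (cadj C ** Y ** C) v = qform Y (C *v v)"
proof -
  have "qform (cadj C ** Y ** C) v = sform (cadj C ** (Y ** C)) v v"
    by (simp add: qform_sform matrix_mul_assoc)
  also have "\<dots> = sform (Y ** C) (C *v v) v" by (rule sform_adj)
  also have "\<dots> = qform Y (C *v v)"
    by (simp add: sform_def qform_def matrix_vector_mul_assoc[symmetric])
  finally show ?thesis .
qed

lemma psd_congr: "psd Y \<Longrightarrow> psd (cadj C ** Y ** C)"
  by (auto simp: psd_def qform_congr cadj_mult matrix_mul_assoc)

lemma psd_id: "psd (mat 1 :: complex^'n^'n)"
proof -
  have "qform (mat 1) v = (\<Sum>i\<in>UNIV. of_real ((cmod (v$i))^2))" for v :: "complex^'n"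
    by (simp add: qform_def complex_norm_square mult.commute del: of_real_power)
  then have "qform (mat 1) v = of_real (\<Sum>i\<in>UNIV. (cmod (v$i))^2)" for v :: "complex^'n"
    by (simp only: of_real_sum)
  then show ?thesis by (auto simp: psd_def intro: sum_nonneg)
qed

lemma psd_gram: "psd (cadj C ** C)"
  using psd_congr[OF psd_id, of C] by simp

lemma projector_psd: "projector P \<Longrightarrow> psd P"
  using psd_gram[of P] by (simp add: projector_def)

lemma loewner_trace: "loewner_le A B \<Longrightarrow> psd Y \<Longrightarrow> Re (mtrace (A ** Y)) \<le> Re (mtrace (B ** Y))"
  using psd_trace_nonneg[of "B - A" Y]
  by (simp add: loewner_le_def matrix_diff_rdistrib mtrace_diff)

lemma psd_trace: "psd Y \<Longrightarrow> 0 \<le> Re (mtrace Y)"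
  using psd_trace_nonneg[OF psd_id] by simp

lemma psd_density: "density \<rho> \<Longrightarrow> psd \<rho>" by (simp add: density_def)

lemma trace_cs:
  assumes "density \<rho>"
  shows "(cmod (mtrace (B ** \<rho>)))^2 \<le> Re (mtrace (cadj B ** B ** \<rho>))"
proof -
  define l where "l = mtrace (B ** \<rho>)"
  define C where "C = B - mat l"
  have rho: "psd \<rho>" "mtrace \<rho> = 1" using assms by (auto simp: density_def)
  have hr: "cadj \<rho> = \<rho>" using rho by (simp add: psd_def)
  have "0 \<le> Re (mtrace (cadj C ** C ** \<rho>))" by (rule psd_trace_nonneg[OF psd_gram rho(1)])
  also have "cadj C ** C ** \<rho> = cadj B ** B ** \<rho> - cadj B ** mat l ** \<rho> - mat (cnj l) ** B ** \<rho>
        + mat (cnj l) ** mat l ** \<rho>"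
    by (simp add: C_def cadj_diff matrix_diff_ldistrib matrix_diff_rdistrib matrix_add_rdistrib' algebra_simps)
  also have "mtrace \<dots> = mtrace (cadj B ** B ** \<rho>) - l * cnj l"
  proof -
    have t1: "mtrace (cadj B ** mat l ** \<rho>) = l * cnj l"
    proof -
      have "mtrace (cadj B ** mat l ** \<rho>) = mtrace (mat l ** (\<rho> ** cadj B))"
        by (metis matrix_mul_assoc mtrace_comm)
      also have "\<dots> = l * mtrace (\<rho> ** cadj B)" by (rule mtrace_mat_left)
      also have "mtrace (\<rho> ** cadj B) = cnj l"
        by (metis cadj_mult hr l_def mtrace_cadj mtrace_comm)
      finally show ?thesis .
    qed
    have t2: "mtrace (mat (cnj l) ** B ** \<rho>) = cnj l * l"
      by (simp add: matrix_mul_assoc[symmetric] mtrace_mat_left l_def)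
    have t3: "mtrace (mat (cnj l) ** mat l ** \<rho>) = cnj l * l"
      by (simp add: matrix_mul_assoc[symmetric] mtrace_mat_left rho(2))
    show ?thesis by (simp add: mtrace_add mtrace_diff t1 t2 t3)
  qed
  finally have "0 \<le> Re (mtrace (cadj B ** B ** \<rho>)) - Re (l * cnj l)" by simp
  moreover have "Re (l * cnj l) = (cmod l)^2" by (simp add: complex_norm_square[symmetric] del: of_real_power)
  ultimately show ?thesis by (simp add: l_def)
qed


lemma proj_idem: "projector P \<Longrightarrow> P ** P = P" by (simp add: projector_def)
lemma proj_herm: "projector P \<Longrightarrow> cadj P = P" by (simp add: projector_def)

locale seqdec =
  fixes p :: "'x::finite \<Rightarrow> real"
    and rho :: "'x \<Rightarrow> complex^'n::finite^'n"
    and Cproj :: "complex^'n^'n"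
    and Px :: "'x \<Rightarrow> complex^'n^'n"
    and D d \<epsilon> :: real
  assumes p_nonneg: "\<And>x. 0 \<le> p x"
    and p_sum: "(\<Sum>x\<in>UNIV. p x) = 1"
    and rho_density: "\<And>x. density (rho x)"
    and Pi_proj: "projector Cproj"
    and Px_proj: "\<And>x. projector (Px x)"
    and D_pos: "D > 0" and d_pos: "d > 0"
    and tr_Pi: "\<And>x. Re (mtrace (Cproj ** rho x)) \<ge> 1 - \<epsilon>"
    and tr_Px: "\<And>x. Re (mtrace (Px x ** rho x)) \<ge> 1 - \<epsilon>"
    and Px_lower: "\<And>x. loewner_le ((1/d) *\<^sub>R Px x) (Px x ** rho x ** Px x)"
    and Pi_upper: "loewner_le (Cproj ** (\<Sum>x\<in>UNIV. p x *\<^sub>R rho x) ** Cproj) ((1/D) *\<^sub>R Cproj)"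
    and commute: "\<And>x. Px x ** rho x = rho x ** Px x"
begin

definition "Pbar = (\<Sum>x\<in>UNIV. p x *\<^sub>R Px x)"
definition "rbar = (\<Sum>x\<in>UNIV. p x *\<^sub>R rho x)"
definition "Aop = Cproj ** Pbar ** Cproj"
definition "a = d / D"

lemma PiPi: "Cproj ** Cproj = Cproj" using proj_idem[OF Pi_proj] .
lemma Pi_herm: "cadj Cproj = Cproj" using proj_herm[OF Pi_proj] .
lemma PxPx: "Px x ** Px x = Px x" using proj_idem[OF Px_proj] .
lemma Px_herm: "cadj (Px x) = Px x" using proj_herm[OF Px_proj] .
lemma rho_psd: "psd (rho x)" using rho_density by (simp add: density_def)
lemma rho_herm: "cadj (rho x) = rho x" using rho_psd by (simp add: psd_def)

lemma W_eq: "Px x ** rho x ** Px x = Px x ** rho x"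
  by (metis PxPx commute matrix_mul_assoc)

lemma W_psd: "psd (Px x ** rho x)"
  using psd_congr[OF rho_psd, of "Px x" x] by (simp add: Px_herm W_eq)

lemma rest_eq: "(mat 1 - Px x) ** rho x ** (mat 1 - Px x) = rho x - Px x ** rho x"
proof -
  have "(mat 1 - Px x) ** rho x ** (mat 1 - Px x)
      = rho x - rho x ** Px x - Px x ** rho x + Px x ** rho x ** Px x"
    by (simp add: matrix_diff_ldistrib matrix_diff_rdistrib)
  also have "\<dots> = rho x - Px x ** rho x - Px x ** rho x + Px x ** rho x"
    by (simp only: W_eq commute[symmetric])
  finally show ?thesis by simp
qed

lemma rest_psd: "psd (rho x - Px x ** rho x)"
proof -
  have "psd (cadj (mat 1 - Px x) ** rho x ** (mat 1 - Px x))" by (rule psd_congr[OF rho_psd])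
  then show ?thesis by (simp add: cadj_diff Px_herm rest_eq)
qed

lemma Px_le: "loewner_le (Px x) (d *\<^sub>R rho x)"
proof -
  have "d *\<^sub>R rho x - Px x = d *\<^sub>R (rho x - Px x ** rho x) + d *\<^sub>R (Px x ** rho x ** Px x - (1/d) *\<^sub>R Px x)"
    using d_pos by (simp add: W_eq algebra_simps)
  moreover have "psd (d *\<^sub>R (rho x - Px x ** rho x))" using rest_psd d_pos by (simp add: psd_scaleR)
  moreover have "psd (d *\<^sub>R (Px x ** rho x ** Px x - (1/d) *\<^sub>R Px x))"
    using Px_lower[of x] d_pos by (simp add: loewner_le_def psd_scaleR)
  ultimately show ?thesis by (simp add: loewner_le_def psd_add)
qed

lemma mtrace_sum_scaleR: "mtrace ((\<Sum>x\<in>UNIV. p x *\<^sub>R F x) ** (Y::complex^'n^'n)) = (\<Sum>x\<in>UNIV. of_real (p x) * mtrace (F x ** Y))"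
  by (simp add: matrix_sum_left matrix_scaleR_left mtrace_sum mtrace_scaleR)

lemma key_A:
  assumes Y: "psd Y" and YP: "Cproj ** Y ** Cproj = Y"
  shows "Re (mtrace (Aop ** Y)) \<le> a * Re (mtrace Y)"
proof -
  have PY: "Cproj ** Y = Y" by (metis PiPi YP matrix_mul_assoc)
  have "mtrace (Aop ** Y) = mtrace (Pbar ** (Cproj ** Y ** Cproj))"
    unfolding Aop_def by (metis matrix_mul_assoc mtrace_comm)
  also have "\<dots> = mtrace (Pbar ** Y)" using YP by simp
  finally have e1: "Re (mtrace (Aop ** Y)) = (\<Sum>x\<in>UNIV. p x * Re (mtrace (Px x ** Y)))"
    by (simp add: Pbar_def mtrace_sum_scaleR Re_sum)
  have "(\<Sum>x\<in>UNIV. p x * Re (mtrace (Px x ** Y))) \<le> (\<Sum>x\<in>UNIV. p x * (d * Re (mtrace (rho x ** Y))))"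
  proof (rule sum_mono)
    fix x
    have "Re (mtrace (Px x ** Y)) \<le> Re (mtrace ((d *\<^sub>R rho x) ** Y))" by (rule loewner_trace[OF Px_le Y])
    also have "\<dots> = d * Re (mtrace (rho x ** Y))" by (simp add: matrix_scaleR_left mtrace_scaleR)
    finally show "p x * Re (mtrace (Px x ** Y)) \<le> p x * (d * Re (mtrace (rho x ** Y)))"
      by (rule mult_left_mono[OF _ p_nonneg])
  qed
  also have "\<dots> = d * Re (mtrace (rbar ** Y))"
    by (simp add: rbar_def mtrace_sum_scaleR Re_sum sum_distrib_left algebra_simps)
  also have "mtrace (rbar ** Y) = mtrace ((Cproj ** rbar ** Cproj) ** Y)"
  proof -
    have "mtrace ((Cproj ** rbar ** Cproj) ** Y) = mtrace (rbar ** (Cproj ** Y ** Cproj))"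
      by (metis matrix_mul_assoc mtrace_comm)
    then show ?thesis using YP by simp
  qed
  also have "Re (mtrace ((Cproj ** rbar ** Cproj) ** Y)) \<le> Re (mtrace (((1/D) *\<^sub>R Cproj) ** Y))"
    by (rule loewner_trace[OF Pi_upper[folded rbar_def] Y])
  also have "\<dots> = (1/D) * Re (mtrace Y)" by (simp add: matrix_scaleR_left mtrace_scaleR PY)
  finally show ?thesis using e1 d_pos by (simp add: a_def mult_left_mono)
qed

end

fun mpow :: "complex^'n^'n \<Rightarrow> nat \<Rightarrow> complex^'n^'n" where
  "mpow B 0 = mat 1"
| "mpow B (Suc m) = B ** mpow B m"

lemma mpow_comm: "B ** mpow B m = mpow B m ** B"
  by (induct m) (simp_all add: matrix_mul_assoc)

context seqdec begin

definition "Qb x = Cproj ** (mat 1 - Px x) ** Cproj"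
definition "Bq = (\<Sum>x\<in>UNIV. p x *\<^sub>R Qb x)"

lemma Qb_eq: "Qb x = Cproj - Cproj ** Px x ** Cproj"
  by (simp add: Qb_def matrix_diff_ldistrib matrix_diff_rdistrib PiPi)

lemma Aop_sum: "Aop = (\<Sum>x\<in>UNIV. p x *\<^sub>R (Cproj ** Px x ** Cproj))"
  by (simp add: Aop_def Pbar_def matrix_sum_left matrix_sum_right matrix_scaleR_left matrix_scaleR_right)

lemma Bq_eq: "Bq = Cproj - Aop"
proof -
  have "Bq = (\<Sum>x\<in>UNIV. p x *\<^sub>R Cproj) - (\<Sum>x\<in>UNIV. p x *\<^sub>R (Cproj ** Px x ** Cproj))"
    by (simp add: Bq_def Qb_eq scaleR_diff_right sum_subtractf)
  also have "(\<Sum>x\<in>UNIV. p x *\<^sub>R Cproj) = Cproj" by (simp add: scaleR_sum_left[symmetric] p_sum)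
  finally show ?thesis by (simp add: Aop_sum)
qed

lemma Pi_A: "Cproj ** Aop = Aop" by (simp add: Aop_def matrix_mul_assoc PiPi)
lemma A_Pi: "Aop ** Cproj = Aop" by (simp add: Aop_def matrix_mul_assoc[symmetric] PiPi)
lemma Pbar_herm: "cadj Pbar = Pbar" by (simp add: Pbar_def cadj_sum cadj_scaleR Px_herm)
lemma A_herm: "cadj Aop = Aop" by (simp add: Aop_def cadj_mult Pbar_herm Pi_herm matrix_mul_assoc)
lemma Pi_Bq: "Cproj ** Bq = Bq" by (simp add: Bq_eq matrix_diff_ldistrib PiPi Pi_A)
lemma Bq_Pi: "Bq ** Cproj = Bq" by (simp add: Bq_eq matrix_diff_rdistrib PiPi A_Pi)
lemma Bq_herm: "cadj Bq = Bq" by (simp add: Bq_eq cadj_diff Pi_herm A_herm)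
lemma BqBq: "Bq ** Bq = Cproj - Aop - Aop + cadj Aop ** Aop"
  by (simp add: Bq_eq matrix_diff_ldistrib matrix_diff_rdistrib PiPi Pi_A A_Pi A_herm)

lemma a_nonneg: "a \<ge> 0" using d_pos D_pos by (simp add: a_def)

lemma trY: assumes "Cproj ** Y ** Cproj = Y" shows "mtrace (Cproj ** Y) = mtrace Y"
  by (metis PiPi assms matrix_mul_assoc)

lemma F1: assumes Y: "psd Y" and YP: "Cproj ** Y ** Cproj = Y"
  shows "(1 - a) * Re (mtrace Y) \<le> Re (mtrace (Bq ** Y))"
proof -
  have "mtrace (Bq ** Y) = mtrace Y - mtrace (Aop ** Y)"
    by (simp add: Bq_eq matrix_diff_rdistrib mtrace_diff trY[OF YP])
  then have "Re (mtrace (Bq ** Y)) = Re (mtrace Y) - Re (mtrace (Aop ** Y))" by simp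
  then show ?thesis using key_A[OF Y YP] by (simp add: algebra_simps)
qed

lemma F2: assumes Y: "psd Y" and YP: "Cproj ** Y ** Cproj = Y"
  shows "(1 - 2*a) * Re (mtrace Y) \<le> Re (mtrace (Bq ** Bq ** Y))"
proof -
  have "mtrace (Bq ** Bq ** Y) = mtrace Y - mtrace (Aop ** Y) - mtrace (Aop ** Y) + mtrace (cadj Aop ** Aop ** Y)"
    by (simp only: BqBq matrix_diff_rdistrib matrix_add_rdistrib' mtrace_diff mtrace_add trY[OF YP])
  then have "Re (mtrace (Bq ** Bq ** Y)) = Re (mtrace Y) - Re (mtrace (Aop ** Y)) - Re (mtrace (Aop ** Y)) + Re (mtrace (cadj Aop ** Aop ** Y))"
    by simp
  moreover have "0 \<le> Re (mtrace (cadj Aop ** Aop ** Y))" by (rule psd_trace_nonneg[OF psd_gram Y])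
  ultimately show ?thesis using key_A[OF Y YP] by (simp add: algebra_simps)
qed

lemma pow_bound:
  "psd Y \<Longrightarrow> Cproj ** Y ** Cproj = Y \<Longrightarrow> real m * a \<le> 1 \<Longrightarrow>
    (1 - real m * a) * Re (mtrace Y) \<le> Re (mtrace (mpow Bq m ** Y))"
proof (induction m arbitrary: Y rule: less_induct)
  case (less m)
  note Y = less.prems(1) and YP = less.prems(2) and ma = less.prems(3)
  show ?case
  proof (cases m)
    case 0 then show ?thesis by simp
  next
    case (Suc m1)
    show ?thesis
    proof (cases m1)
      case 0 then show ?thesis using F1[OF Y YP] Suc by simp
    next
      case (Suc k)
      have m: "m = Suc (Suc k)" using Suc \<open>m = Suc m1\<close> by simp
      define Z where "Z = mpow Bq k"
      define Y' where "Y' = Bq ** Y ** Bq"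
      have Y'psd: "psd Y'" using psd_congr[OF Y, of Bq] by (simp add: Y'_def Bq_herm)
      have Y'P: "Cproj ** Y' ** Cproj = Y'"
        by (simp add: Y'_def matrix_mul_assoc Pi_Bq) (simp add: matrix_mul_assoc[symmetric] Bq_Pi)
      have ka: "real k * a \<le> 1" using ma m a_nonneg by (simp add: algebra_simps)
      have IH: "(1 - real k * a) * Re (mtrace Y') \<le> Re (mtrace (mpow Bq k ** Y'))"
        using less.IH[of k Y'] m Y'psd Y'P ka by simp
      have tr1: "mtrace (mpow Bq m ** Y) = mtrace (Z ** Y')"
      proof -
        have "mtrace (Z ** Y') = mtrace ((Z ** Bq ** Y) ** Bq)" by (simp add: Y'_def matrix_mul_assoc)
        also have "\<dots> = mtrace (Bq ** (Z ** Bq ** Y))" by (rule mtrace_comm)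
        also have "Z ** Bq = Bq ** Z" by (simp add: Z_def mpow_comm)
        also have "Bq ** (Bq ** Z ** Y) = mpow Bq m ** Y" by (simp add: m Z_def matrix_mul_assoc)
        finally show ?thesis by simp
      qed
      have tr2: "mtrace Y' = mtrace (Bq ** Bq ** Y)"
        by (metis Y'_def matrix_mul_assoc mtrace_comm)
      have T: "0 \<le> Re (mtrace Y)" by (rule psd_trace[OF Y])
      have k1: "0 \<le> 1 - real k * a" using ka by simp
      have "(1 - real m * a) * Re (mtrace Y) \<le> (1 - real k * a) * ((1 - 2*a) * Re (mtrace Y))"
      proof -
        have "(1 - real k * a) * (1 - 2*a) = 1 - real m * a + 2 * real k * a * a" by (simp add: m algebra_simps)
        moreover have "0 \<le> 2 * real k * a * a * Re (mtrace Y)" using a_nonneg T by simp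
        ultimately show ?thesis by (simp add: algebra_simps)
      qed
      also have "\<dots> \<le> (1 - real k * a) * Re (mtrace Y')"
        using F2[OF Y YP] tr2 k1 by (simp add: mult_left_mono)
      also have "\<dots> \<le> Re (mtrace (mpow Bq m ** Y))" using IH tr1 Z_def by simp
      finally show ?thesis .
    qed
  qed
qed

end

definition Ls :: "nat \<Rightarrow> ('x::finite) list set" where "Ls n = {c. length c = n}"
definition wt :: "('x \<Rightarrow> real) \<Rightarrow> nat \<Rightarrow> 'x list \<Rightarrow> real" where "wt p n c = (\<Prod>m<n. p (c ! m))"

lemma Ls_finite[simp]: "finite (Ls n)" by (simp add: Ls_def finite_list_length)

lemma wt_snoc: "length xs = n \<Longrightarrow> wt p (Suc n) (xs @ [x]) = wt p n xs * p x"
proof -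
  assume l: "length xs = n"
  have "(\<Prod>m<n. p ((xs@[x])!m)) = (\<Prod>m<n. p (xs!m))" by (rule prod.cong) (auto simp: nth_append l)
  then show ?thesis using l by (simp add: wt_def nth_append)
qed

lemma Ls_0[simp]: "Ls 0 = {[]}" by (auto simp: Ls_def)

lemma Ls_Suc: "Ls (Suc n) = (\<lambda>(xs, x). xs @ [x]) ` (Ls n \<times> UNIV)"
  by (auto simp: Ls_def length_Suc_conv_rev image_iff)

lemma split_snoc:
  fixes f :: "'x::finite list \<Rightarrow> 'b::real_vector"
  shows "(\<Sum>c\<in>Ls (Suc n). wt p (Suc n) c *\<^sub>R f c) = (\<Sum>xs\<in>Ls n. \<Sum>x\<in>UNIV. (wt p n xs * p x) *\<^sub>R f (xs @ [x]))"
proof -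
  have inj: "inj_on (\<lambda>(xs, x). xs @ [x]) (Ls n \<times> (UNIV::'x set))"
    by (auto simp: inj_on_def)
  have "(\<Sum>c\<in>Ls (Suc n). wt p (Suc n) c *\<^sub>R f c)
      = (\<Sum>(xs,x)\<in>Ls n \<times> UNIV. wt p (Suc n) (xs @ [x]) *\<^sub>R f (xs @ [x]))"
    unfolding Ls_Suc by (subst sum.reindex[OF inj]) (simp add: case_prod_beta)
  also have "\<dots> = (\<Sum>(xs,x)\<in>Ls n \<times> UNIV. (wt p n xs * p x) *\<^sub>R f (xs @ [x]))"
    by (rule sum.cong) (auto simp: Ls_def wt_snoc)
  also have "\<dots> = (\<Sum>xs\<in>Ls n. \<Sum>x\<in>UNIV. (wt p n xs * p x) *\<^sub>R f (xs @ [x]))"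
    by (simp add: sum.cartesian_product)
  finally show ?thesis .
qed

lemma split_snoc_real:
  fixes f :: "'x::finite list \<Rightarrow> real"
  shows "(\<Sum>c\<in>Ls (Suc n). wt p (Suc n) c * f c) = (\<Sum>xs\<in>Ls n. \<Sum>x\<in>UNIV. (wt p n xs * p x) * f (xs @ [x]))"
  using split_snoc[of p n f] by simp

lemma wt_sum:
  assumes "(\<Sum>x\<in>UNIV. p x) = 1"
  shows "(\<Sum>c\<in>Ls n. wt p n c) = 1"
proof (induct n)
  case 0
  show ?case by (simp add: wt_def)
next
  case (Suc n)
  have "(\<Sum>c\<in>Ls (Suc n). wt p (Suc n) c) = (\<Sum>c\<in>Ls (Suc n). wt p (Suc n) c * 1)" by simp
  also have "\<dots> = (\<Sum>xs\<in>Ls n. \<Sum>x\<in>UNIV. (wt p n xs * p x) * 1)" by (rule split_snoc_real)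
  also have "\<dots> = (\<Sum>xs\<in>Ls n. wt p n xs)" by (simp add: sum_distrib_left[symmetric] assms)
  finally show ?case using Suc by simp
qed

lemma marginal:
  assumes "(\<Sum>x\<in>UNIV. p x) = 1" and "k \<le> n"
  shows "(\<Sum>c\<in>Ls n. wt p n c * g (take k c)) = (\<Sum>c\<in>Ls k. wt p k c * g c)"
  using assms(2)
proof (induct n)
  case 0 then show ?case by simp
next
  case (Suc n)
  show ?case
  proof (cases "k = Suc n")
    case True
    then show ?thesis by (intro sum.cong) (auto simp: Ls_def)
  next
    case False
    then have kn: "k \<le> n" using Suc by simp
    have "(\<Sum>c\<in>Ls (Suc n). wt p (Suc n) c * g (take k c))
        = (\<Sum>xs\<in>Ls n. \<Sum>x\<in>UNIV. (wt p n xs * p x) * g (take k (xs @ [x])))" by (rule split_snoc_real)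
    also have "\<dots> = (\<Sum>xs\<in>Ls n. \<Sum>x\<in>UNIV. p x * (wt p n xs * g (take k xs)))"
      using kn by (intro sum.cong refl) (auto simp: Ls_def)
    also have "\<dots> = (\<Sum>xs\<in>Ls n. wt p n xs * g (take k xs))"
      by (simp add: sum_distrib_right[symmetric] assms(1))
    finally show ?thesis using Suc kn by simp
  qed
qed

lemma jensen_sq:
  fixes w r :: "'i \<Rightarrow> real"
  assumes "finite S" "\<And>i. i \<in> S \<Longrightarrow> w i \<ge> 0" "(\<Sum>i\<in>S. w i) = 1"
  shows "(\<Sum>i\<in>S. w i * r i)^2 \<le> (\<Sum>i\<in>S. w i * (r i)^2)"
proof -
  define mu where "mu = (\<Sum>i\<in>S. w i * r i)"
  have "0 \<le> (\<Sum>i\<in>S. w i * (r i - mu)^2)" using assms by (intro sum_nonneg) auto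
  also have "\<dots> = (\<Sum>i\<in>S. w i * (r i)^2 - (2 * mu) * (w i * r i) + mu^2 * w i)"
    by (rule sum.cong) (simp_all add: power2_eq_square algebra_simps)
  also have "\<dots> = (\<Sum>i\<in>S. w i * (r i)^2) - (2 * mu) * (\<Sum>i\<in>S. w i * r i) + mu^2 * (\<Sum>i\<in>S. w i)"
    by (simp only: sum.distrib sum_subtractf sum_distrib_left[symmetric])
  finally show ?thesis using assms(3) by (simp add: mu_def power2_eq_square)
qed


context seqdec begin

lemma Qb_herm: "cadj (Qb x) = Qb x"
  by (simp add: Qb_eq cadj_diff cadj_mult Pi_herm Px_herm matrix_mul_assoc)

lemma prodL_eq: "prodL Cproj Px xs = cadj (prodR Cproj Px xs)"
  by (induct xs) (simp_all add: Qb_def[symmetric] cadj_mult Qb_herm)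

lemma prodR_snoc: "prodR Cproj Px (xs @ [x]) = Qb x ** prodR Cproj Px xs"
  by (induct xs) (simp_all add: Qb_def[symmetric] matrix_mul_assoc)

lemma E_prodR: "(\<Sum>xs\<in>Ls m. wt p m xs *\<^sub>R prodR Cproj Px xs) = mpow Bq m"
proof (induct m)
  case 0 then show ?case by (simp add: wt_def)
next
  case (Suc m)
  have "(\<Sum>xs\<in>Ls (Suc m). wt p (Suc m) xs *\<^sub>R prodR Cproj Px xs)
     = (\<Sum>xs\<in>Ls m. \<Sum>x\<in>UNIV. (wt p m xs * p x) *\<^sub>R prodR Cproj Px (xs @ [x]))"
    by (rule split_snoc)
  also have "\<dots> = (\<Sum>xs\<in>Ls m. \<Sum>x\<in>UNIV. (p x *\<^sub>R Qb x) ** (wt p m xs *\<^sub>R prodR Cproj Px xs))"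
    by (simp add: prodR_snoc matrix_scaleR_left matrix_scaleR_right mult.commute)
  also have "\<dots> = (\<Sum>xs\<in>Ls m. Bq ** (wt p m xs *\<^sub>R prodR Cproj Px xs))"
    by (simp add: Bq_def matrix_sum_left)
  also have "\<dots> = Bq ** mpow Bq m" by (simp add: matrix_sum_right[symmetric] Suc)
  finally show ?case by simp
qed

lemma PxPx': "X ** Px x ** Px x = X ** Px x" by (metis PxPx matrix_mul_assoc)

lemma seq_decomp:
  assumes "length xs = m"
  shows "seqPOVM Cproj Px (xs @ [x]) m = cadj (Px x ** Cproj ** prodR Cproj Px xs) ** (Px x ** Cproj ** prodR Cproj Px xs)"
  using assms by (simp add: seqPOVM_def prodL_eq cadj_mult Pi_herm Px_herm matrix_mul_assoc PxPx' nth_append)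

lemma IminusPi_proj: "projector (mat 1 - Cproj)"
  by (simp add: projector_def matrix_diff_ldistrib matrix_diff_rdistrib PiPi cadj_diff Pi_herm)

lemma trace_id: "Cproj ** Z = Z ** Cproj \<Longrightarrow>
  mtrace (Px x ** Cproj ** Z ** rho x) = mtrace (Z ** (Cproj ** (Px x ** rho x) ** Cproj))"
proof -
  assume c: "Cproj ** Z = Z ** Cproj"
  have "mtrace (Px x ** Cproj ** Z ** rho x) = mtrace ((Px x ** Cproj) ** (Z ** rho x))"
    by (simp add: matrix_mul_assoc)
  also have "\<dots> = mtrace ((Z ** rho x) ** (Px x ** Cproj))" by (rule mtrace_comm)
  also have "\<dots> = mtrace (Z ** (Px x ** rho x) ** Cproj)" by (simp add: matrix_mul_assoc commute)
  also have "\<dots> = mtrace ((Z ** (Px x ** rho x) ** Cproj) ** Cproj)"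
    by (simp add: matrix_mul_assoc[symmetric] PiPi)
  also have "\<dots> = mtrace (Cproj ** (Z ** (Px x ** rho x) ** Cproj))" by (rule mtrace_comm)
  also have "\<dots> = mtrace (Z ** (Cproj ** (Px x ** rho x) ** Cproj))"
    by (simp add: matrix_mul_assoc c)
  finally show ?thesis .
qed

lemma Y_trace: "1 - 2 * \<epsilon> \<le> Re (mtrace (Cproj ** (Px x ** rho x) ** Cproj))"
proof -
  define W where "W = Px x ** rho x"
  have t1: "mtrace (Cproj ** W ** Cproj) = mtrace (Cproj ** W)"
    by (metis PiPi matrix_mul_assoc mtrace_comm)
  have t2: "Cproj ** W = W - (mat 1 - Cproj) ** rho x + (mat 1 - Cproj) ** (rho x - W)"
    by (simp add: matrix_diff_ldistrib matrix_diff_rdistrib)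
  have p1: "0 \<le> Re (mtrace ((mat 1 - Cproj) ** (rho x - W)))"
    using psd_trace_nonneg[OF projector_psd[OF IminusPi_proj] rest_psd[of x]] by (simp add: W_def)
  have p2: "Re (mtrace ((mat 1 - Cproj) ** rho x)) \<le> \<epsilon>"
    using tr_Pi[of x] rho_density[of x] by (simp add: matrix_diff_rdistrib mtrace_diff density_def)
  have p3: "1 - \<epsilon> \<le> Re (mtrace W)" using tr_Px[of x] by (simp add: W_def)
  have "Re (mtrace (Cproj ** W ** Cproj)) = Re (mtrace (Cproj ** W))" by (simp only: t1)
  also have "\<dots> = Re (mtrace W) - Re (mtrace ((mat 1 - Cproj) ** rho x))
      + Re (mtrace ((mat 1 - Cproj) ** (rho x - W)))"
    by (simp only: t2 mtrace_add mtrace_diff) simp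
  finally have "Re (mtrace (Cproj ** W ** Cproj)) = Re (mtrace W) - Re (mtrace ((mat 1 - Cproj) ** rho x))
      + Re (mtrace ((mat 1 - Cproj) ** (rho x - W)))" .
  then show ?thesis using p1 p2 p3 by (simp add: W_def)
qed

lemma Pi_mpow: "Cproj ** mpow Bq m = mpow Bq m ** Cproj"
proof (induct m)
  case 0 then show ?case by simp
next
  case (Suc m)
  have "Cproj ** (Bq ** mpow Bq m) = Bq ** mpow Bq m" by (simp add: matrix_mul_assoc Pi_Bq)
  also have "\<dots> = Bq ** (Cproj ** mpow Bq m)" by (simp add: matrix_mul_assoc Bq_Pi)
  also have "\<dots> = (Bq ** mpow Bq m) ** Cproj" by (simp add: Suc matrix_mul_assoc)
  finally show ?case by simp
qed

lemma msg_bound: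
  assumes ma: "real m * a \<le> 1" and eps: "\<epsilon> \<le> 1/2"
  shows "(1 - real m * a) * (1 - 2*\<epsilon>) \<le> Re (mtrace (Px x ** Cproj ** mpow Bq m ** rho x))"
proof -
  define Y where "Y = Cproj ** (Px x ** rho x) ** Cproj"
  have Ypsd: "psd Y" using psd_congr[OF W_psd, of Cproj x] by (simp add: Y_def Pi_herm)
  have YP: "Cproj ** Y ** Cproj = Y"
    by (simp add: Y_def matrix_mul_assoc PiPi) (simp add: matrix_mul_assoc[symmetric] PiPi)
  have "(1 - real m * a) * (1 - 2*\<epsilon>) \<le> (1 - real m * a) * Re (mtrace Y)"
    using Y_trace[of x] ma by (simp add: Y_def mult_left_mono)
  also have "\<dots> \<le> Re (mtrace (mpow Bq m ** Y))" by (rule pow_bound[OF Ypsd YP ma])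
  also have "\<dots> = Re (mtrace (Px x ** Cproj ** mpow Bq m ** rho x))"
    using trace_id[OF Pi_mpow[of m], of x] by (simp add: Y_def)
  finally show ?thesis .
qed

lemma lin_trace:
  fixes X Z :: "complex^'n^'n" and R :: "'y \<Rightarrow> complex^'n^'n" and S :: "'y set"
  assumes "finite S"
  shows "mtrace (X ** (\<Sum>i\<in>S. c i *\<^sub>R R i) ** Z) = (\<Sum>i\<in>S. of_real (c i) * mtrace (X ** R i ** Z))"
  using assms by (simp add: matrix_sum_right matrix_sum_left matrix_scaleR_left matrix_scaleR_right mtrace_sum mtrace_scaleR)

lemma inner_bound:
  assumes ma: "real m * a \<le> 1" and eps: "\<epsilon> \<le> 1/2"
  shows "((1 - real m * a) * (1 - 2*\<epsilon>))^2 \<le>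
    (\<Sum>xs\<in>Ls m. wt p m xs * Re (mtrace (seqPOVM Cproj Px (xs @ [x]) m ** rho x)))"
proof -
  define z where "z xs = mtrace (Px x ** Cproj ** prodR Cproj Px xs ** rho x)" for xs
  define L0 where "L0 = (1 - real m * a) * (1 - 2*\<epsilon>)"
  have L0: "0 \<le> L0" using ma eps by (simp add: L0_def)
  have wpos: "\<And>xs. 0 \<le> wt p m xs" by (simp add: wt_def prod_nonneg p_nonneg)
  have wsum: "(\<Sum>xs\<in>Ls m. wt p m xs) = 1" by (rule wt_sum[OF p_sum])
  have "L0 \<le> Re (mtrace (Px x ** Cproj ** mpow Bq m ** rho x))" using msg_bound[OF ma eps] by (simp add: L0_def)
  also have "mtrace (Px x ** Cproj ** mpow Bq m ** rho x) = (\<Sum>xs\<in>Ls m. of_real (wt p m xs) * z xs)"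
    by (simp add: E_prodR[symmetric] lin_trace z_def)
  also have "Re \<dots> = (\<Sum>xs\<in>Ls m. wt p m xs * Re (z xs))" by (simp add: Re_sum)
  also have "\<dots> \<le> (\<Sum>xs\<in>Ls m. wt p m xs * cmod (z xs))"
    by (intro sum_mono mult_left_mono wpos) (simp add: complex_Re_le_cmod)
  finally have "L0 \<le> (\<Sum>xs\<in>Ls m. wt p m xs * cmod (z xs))" .
  then have "L0^2 \<le> (\<Sum>xs\<in>Ls m. wt p m xs * cmod (z xs))^2" using L0 by (simp add: power_mono)
  also have "\<dots> \<le> (\<Sum>xs\<in>Ls m. wt p m xs * (cmod (z xs))^2)"
    by (rule jensen_sq[OF Ls_finite _ wsum]) (rule wpos)
  also have "\<dots> \<le> (\<Sum>xs\<in>Ls m. wt p m xs * Re (mtrace (seqPOVM Cproj Px (xs @ [x]) m ** rho x)))"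
  proof (intro sum_mono mult_left_mono wpos)
    fix xs :: "'x list" assume "xs \<in> Ls m"
    then have l: "length xs = m" by (simp add: Ls_def)
    show "(cmod (z xs))^2 \<le> Re (mtrace (seqPOVM Cproj Px (xs @ [x]) m ** rho x))"
      using trace_cs[OF rho_density[of x], of "Px x ** Cproj ** prodR Cproj Px xs"]
      by (simp add: seq_decomp[OF l] z_def)
  qed
  finally show ?thesis by (simp add: L0_def)
qed

end


lemma seq_take: "m < length c \<Longrightarrow> seqPOVM Cproj Px (take (Suc m) c) m = seqPOVM Cproj Px c m"
  by (simp add: seqPOVM_def min_def)

theorem theorem1:
  fixes p :: "'x::finite \<Rightarrow> real"
    and rho :: "'x \<Rightarrow> complex^'n::finite^'n"
    and Cproj :: "complex^'n^'n"
    and Px :: "'x \<Rightarrow> complex^'n^'n"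
    and D d \<epsilon> :: real
    and M :: nat
  assumes p_nonneg: "\<And>x. 0 \<le> p x"
    and p_sum: "(\<Sum>x\<in>UNIV. p x) = 1"
    and rho_density: "\<And>x. density (rho x)"
    and Pi_proj: "projector Cproj"
    and Px_proj: "\<And>x. projector (Px x)"
    and D_pos: "D > 0" and d_pos: "d > 0"
    and eps_pos: "0 < \<epsilon>" and eps_le: "\<epsilon> \<le> 1/2"
    and tr_Pi: "\<And>x. Re (mtrace (Cproj ** rho x)) \<ge> 1 - \<epsilon>"
    and tr_Px: "\<And>x. Re (mtrace (Px x ** rho x)) \<ge> 1 - \<epsilon>"
    and Px_lower: "\<And>x. loewner_le ((1/d) *\<^sub>R Px x) (Px x ** rho x ** Px x)"
    and Pi_upper: "loewner_le (Cproj ** (\<Sum>x\<in>UNIV. p x *\<^sub>R rho x) ** Cproj) ((1/D) *\<^sub>R Cproj)"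
    and commute: "\<And>x. Px x ** rho x = rho x ** Px x"
    and M_pos: "M > 0"
    and cond: "2 - exp (d * real M / D) > 0"
  shows "code_expect p M (psucc Cproj Px rho)
           \<ge> \<bar>(1 - 2 * \<epsilon>) * (2 - exp (d / D * real M))\<bar>^2"
proof -
  interpret S: seqdec p rho Cproj Px D d \<epsilon>
    by (unfold_locales) (fact p_nonneg p_sum rho_density Pi_proj Px_proj D_pos d_pos tr_Pi tr_Px
        Px_lower Pi_upper commute)+
  define a where "a = d / D"
  have aS: "S.a = a" by (simp add: S.a_def a_def)
  have a0: "0 \<le> a" using d_pos D_pos by (simp add: a_def)
  have eMa: "exp (real M * a) < 2" using cond by (simp add: a_def mult.commute)
  have Ma1: "real M * a \<le> exp (real M * a) - 1" using exp_ge_add_one_self[of "real M * a"] by linarith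
  define L where "L = (1 - 2 * \<epsilon>) * (2 - exp (real M * a))"
  have L0: "0 \<le> L" using eMa eps_le by (simp add: L_def)
  define f where "f m c = Re (mtrace (seqPOVM Cproj Px c m ** rho (c ! m)))" for m c
  have key: "L^2 \<le> (\<Sum>c\<in>Ls M. wt p M c * f m c)" if mM: "m < M" for m
  proof -
    have ma: "real m * a \<le> 1" using mM a0 Ma1 eMa
      by (smt (verit) mult_right_mono of_nat_less_iff)
    have LL: "L \<le> (1 - real m * a) * (1 - 2*\<epsilon>)"
    proof -
      have "real m * a \<le> real M * a" using mM a0 by (simp add: mult_right_mono)
      then have "2 - exp (real M * a) \<le> 1 - real m * a" using Ma1 by simp
      then have "(2 - exp (real M * a)) * (1 - 2*\<epsilon>) \<le> (1 - real m * a) * (1 - 2*\<epsilon>)"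
        using eps_le by (intro mult_right_mono) auto
      then show ?thesis by (simp add: L_def mult.commute)
    qed
    have "(\<Sum>c\<in>Ls M. wt p M c * f m c) = (\<Sum>c\<in>Ls M. wt p M c * f m (take (Suc m) c))"
      using mM by (intro sum.cong refl) (simp add: Ls_def f_def seq_take)
    also have "\<dots> = (\<Sum>c\<in>Ls (Suc m). wt p (Suc m) c * f m c)"
      by (rule marginal[OF p_sum]) (use mM in simp)
    also have "\<dots> = (\<Sum>xs\<in>Ls m. \<Sum>x\<in>UNIV. (wt p m xs * p x) * f m (xs @ [x]))" by (rule split_snoc_real)
    also have "\<dots> = (\<Sum>x\<in>UNIV. p x * (\<Sum>xs\<in>Ls m. wt p m xs *
          Re (mtrace (seqPOVM Cproj Px (xs @ [x]) m ** rho x))))"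
      by (subst sum.swap) (auto simp: sum_distrib_left f_def Ls_def nth_append mult.commute mult.left_commute intro!: sum.cong)
    finally have e: "(\<Sum>c\<in>Ls M. wt p M c * f m c) = \<dots>" .
    have "L^2 = (\<Sum>x\<in>UNIV. p x * L^2)" by (simp add: sum_distrib_right[symmetric] p_sum)
    also have "\<dots> \<le> (\<Sum>x\<in>UNIV. p x * (\<Sum>xs\<in>Ls m. wt p m xs *
          Re (mtrace (seqPOVM Cproj Px (xs @ [x]) m ** rho x))))"
    proof (intro sum_mono mult_left_mono p_nonneg)
      fix x
      have "L^2 \<le> ((1 - real m * a) * (1 - 2*\<epsilon>))^2" using L0 LL by (simp add: power_mono)
      also have "\<dots> \<le> (\<Sum>xs\<in>Ls m. wt p m xs * Re (mtrace (seqPOVM Cproj Px (xs @ [x]) m ** rho x)))"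
        using S.inner_bound[of m x] ma eps_le aS by simp
      finally show "L^2 \<le> (\<Sum>xs\<in>Ls m. wt p m xs * Re (mtrace (seqPOVM Cproj Px (xs @ [x]) m ** rho x)))" .
    qed
    finally show ?thesis using e by simp
  qed
  have "code_expect p M (psucc Cproj Px rho) = (\<Sum>c\<in>Ls M. wt p M c * ((1 / real M) * (\<Sum>m<M. f m c)))"
    unfolding code_expect_def psucc_def Ls_def wt_def f_def by (intro sum.cong refl) simp
  also have "\<dots> = (1 / real M) * (\<Sum>m<M. \<Sum>c\<in>Ls M. wt p M c * f m c)"
    by (simp add: sum_distrib_left sum.swap[of _ "Ls M"] mult.commute mult.left_commute)
  also have "\<dots> \<ge> (1 / real M) * (\<Sum>m<M. L^2)"
    by (intro mult_left_mono sum_mono key) auto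
  also have "(1 / real M) * (\<Sum>m<M. L^2) = L^2" using M_pos by simp
  finally have "L^2 \<le> code_expect p M (psucc Cproj Px rho)" .
  moreover have "\<bar>(1 - 2 * \<epsilon>) * (2 - exp (d / D * real M))\<bar>^2 = L^2"
    by (simp add: L_def a_def mult.commute)
  ultimately show ?thesis by simp
qed


end
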